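(* Let $D\subset\mathbb N^n$ be finite, not contained in any coordinate hyperplane, $p$ a prime, $m\ge1$ an integer and $\varphi:\mathbb Z/m\mathbb Z\to\Sigma_p(D)$ a map. Let $M_{D,p}(\varphi)$ be the set of minimal elements $U\in E_{D,p}(m)$ with $\varphi_U=\varphi$. Then (i) $M_{D,p}(\varphi)$ is empty if and only if at least one of the sets $V(\varphi(-i-1),\varphi(-i))$, $0\le i\le m-1$, is empty; (ii) otherwise the map $$B_\varphi:M_{D,p}(\varphi)\to\prod_{i=0}^{m-1}V(\varphi(-i-1),\varphi(-i))$$ sending $(u_{\mathbf d})_{\mathbf d\in D}$ to its base-$p$ digits $((u_{\mathbf d,i})_{\mathbf d\in D})_{0\le i\le m-1}$ (where $u_{\mathbf d}=\sum_{i=0}^{m-1}u_{\mathbf d,i}p^i$, $0\le u_{\mathbf d,i}\le p-1$) is a well-defined one-to-one correspondence.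
   Context: $s_p$ = base-$p$ digit sum. $E_{D,p}(r)$ = set of $U=(u_{\mathbf d})_{\mathbf d\in D}\in\{0,\dots,p^r-1\}^D$ with $\sum u_{\mathbf d}\mathbf d\equiv0\pmod{p^r-1}$ coordinatewise and all coordinates of $\sum u_{\mathbf d}\mathbf d$ positive ($U$ has length $r$); $s_p(U)=\sum s_p(u_{\mathbf d})$; $\delta_p(D)=\frac1{p-1}\min_{r\ge1}\min_{U\in E_{D,p}(r)}s_p(U)/r$ (the minimum exists); $U\in E_{D,p}(r)$ is minimal if $s_p(U)=(p-1)r\delta_p(D)$. Shift $\delta_r$ on $\{0,\dots,p^r-1\}$: $k\mapsto pk\bmod(p^r-1)$ for $k\le p^r-2$, $p^r-1\mapsto p^r-1$, applied coordinatewise. Support of $U\in E_{D,p}(r)$: $\varphi_U:\mathbb Z/r\mathbb Z\to\mathbb N_{>0}^n$, $\varphi_U(k)=\frac1{p^r-1}\sum_{\mathbf d}\mathbf d(\delta_r^kU)_{\mathbf d}$. $U$ is irreducible if $\varphi_U$ is injective; $MI_{D,p}$ = set of minimal irreducible elements of all lengths; $\Sigma_p(D)=\bigcup_{U\in MI_{D,p}}\mathrm{Im}\varphi_U$. $\psi(U)=(u_{\mathbf d}\bmod p)_{\mathbf d}\in\{0,\dots,p-1\}^D$; for $\mathbf e,\mathbf e'\in\Sigma_p(D)$, $V(\mathbf e,\mathbf e')=\{\psi(U):U\in MI_{D,p},\varphi_U(-1)=\mathbf e,\varphi_U(0)=\mathbf e'\}$. *)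

theory Defs
  imports "HOL-Analysis.Analysis" "HOL-Library.FuncSet"
begin

text \<open>Vectors in N^n are elements of nat^'n (n = CARD('n) >= 1).
  An element U = (u_d)_{d in D} is an extensional function on D.\<close>

function digsum :: "nat \<Rightarrow> nat \<Rightarrow> nat" where
  "digsum p k = (if p \<le> 1 \<or> k = 0 then k else k mod p + digsum p (k div p))"
  by auto
termination
  by (relation "Wellfounded.measure (\<lambda>(p,k). k)") auto

definition sU :: "nat \<Rightarrow> (nat^'n) set \<Rightarrow> (nat^'n \<Rightarrow> nat) \<Rightarrow> nat" where
  "sU p D U = (\<Sum>d\<in>D. digsum p (U d))"

definition wsum :: "(nat^'n) set \<Rightarrow> (nat^'n \<Rightarrow> nat) \<Rightarrow> nat^'n" where
  "wsum D U = (\<chi> j. \<Sum>d\<in>D. U d * d $ j)"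

definition E :: "(nat^'n) set \<Rightarrow> nat \<Rightarrow> nat \<Rightarrow> (nat^'n \<Rightarrow> nat) set" where
  "E D p r = {U \<in> D \<rightarrow>\<^sub>E {0..p^r - 1}.
      (\<forall>j. wsum D U $ j mod (p^r - 1) = 0) \<and> (\<forall>j. 0 < wsum D U $ j)}"

definition delta :: "(nat^'n) set \<Rightarrow> nat \<Rightarrow> real" where
  "delta D p = (1 / (real p - 1)) *
     Inf {real (sU p D U) / real r | r U. r \<ge> 1 \<and> U \<in> E D p r}"

definition minimal :: "(nat^'n) set \<Rightarrow> nat \<Rightarrow> nat \<Rightarrow> (nat^'n \<Rightarrow> nat) \<Rightarrow> bool" where
  "minimal D p r U \<longleftrightarrow> U \<in> E D p r \<and>
     real (sU p D U) = (real p - 1) * real r * delta D p"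

definition shift :: "nat \<Rightarrow> nat \<Rightarrow> nat \<Rightarrow> nat" where
  "shift p r k = (if k \<le> p^r - 2 then (p * k) mod (p^r - 1) else p^r - 1)"

text \<open>support phi_U : Z/rZ -> N^n, represented as an r-periodic function on int\<close>
definition supp :: "(nat^'n) set \<Rightarrow> nat \<Rightarrow> nat \<Rightarrow> (nat^'n \<Rightarrow> nat) \<Rightarrow> int \<Rightarrow> nat^'n" where
  "supp D p r U k = (\<chi> j. (\<Sum>d\<in>D. d $ j * (shift p r ^^ nat (k mod int r)) (U d)) div (p^r - 1))"

definition irreducible_el :: "(nat^'n) set \<Rightarrow> nat \<Rightarrow> nat \<Rightarrow> (nat^'n \<Rightarrow> nat) \<Rightarrow> bool" where
  "irreducible_el D p r U \<longleftrightarrow> inj_on (supp D p r U) {0..<int r}"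

definition MI :: "(nat^'n) set \<Rightarrow> nat \<Rightarrow> (nat \<times> (nat^'n \<Rightarrow> nat)) set" where
  "MI D p = {(r, U). r \<ge> 1 \<and> U \<in> E D p r \<and> minimal D p r U \<and> irreducible_el D p r U}"

definition Sigma_p :: "(nat^'n) set \<Rightarrow> nat \<Rightarrow> (nat^'n) set" where
  "Sigma_p D p = (\<Union>(r, U)\<in>MI D p. range (supp D p r U))"

definition psi :: "(nat^'n) set \<Rightarrow> nat \<Rightarrow> (nat^'n \<Rightarrow> nat) \<Rightarrow> (nat^'n \<Rightarrow> nat)" where
  "psi D p U = (\<lambda>d\<in>D. U d mod p)"

definition V :: "(nat^'n) set \<Rightarrow> nat \<Rightarrow> nat^'n \<Rightarrow> nat^'n \<Rightarrow> (nat^'n \<Rightarrow> nat) set" where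
  "V D p e e' = {psi D p U | r U. (r, U) \<in> MI D p \<and> supp D p r U (-1) = e \<and> supp D p r U 0 = e'}"

definition Mset :: "(nat^'n) set \<Rightarrow> nat \<Rightarrow> nat \<Rightarrow> (int \<Rightarrow> nat^'n) \<Rightarrow> (nat^'n \<Rightarrow> nat) set" where
  "Mset D p m \<phi> = {U \<in> E D p m. minimal D p m U \<and> supp D p m U = \<phi>}"

definition Bmap :: "(nat^'n) set \<Rightarrow> nat \<Rightarrow> nat \<Rightarrow> (nat^'n \<Rightarrow> nat) \<Rightarrow> nat \<Rightarrow> (nat^'n \<Rightarrow> nat)" where
  "Bmap D p m U = (\<lambda>i\<in>{..<m}. \<lambda>d\<in>D. U d div p ^ i mod p)"

end

theory Submission
  imports Defs
begin


declare digsum.simps[simp del]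

lemma num_Suc: "(\<Sum>i<Suc r. c i * (p::nat)^i) = c 0 + p * (\<Sum>i<r. c (Suc i) * p^i)"
  unfolding sum.lessThan_Suc_shift by (simp add: sum_distrib_left mult_ac)

lemma num_bound: "(\<forall>i<r. c i < (p::nat)) \<Longrightarrow> (\<Sum>i<r. c i * p^i) < p^r"
proof (induction r arbitrary: c)
  case 0 then show ?case by simp
next
  case (Suc r)
  have y: "(\<Sum>i<r. c (Suc i) * p^i) < p^r" using Suc by auto
  have c0: "c 0 < p" using Suc by auto
  have "c 0 + p * (\<Sum>i<r. c (Suc i) * p^i) < p + p * (\<Sum>i<r. c (Suc i) * p^i)" using c0 by simp
  also have "\<dots> = p * ((\<Sum>i<r. c (Suc i) * p^i) + 1)" by (simp add: algebra_simps)
  also have "\<dots> \<le> p * p^r" using y by (intro mult_left_mono) auto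
  finally have "c 0 + p * (\<Sum>i<r. c (Suc i) * p^i) < p * p^r" .
  then show ?case by (simp only: num_Suc power_Suc)
qed

lemma num_digit: "(\<forall>i<r. c i < (p::nat)) \<Longrightarrow> i < r \<Longrightarrow> (\<Sum>j<r. c j * p^j) div p^i mod p = c i"
proof (induction r arbitrary: c i)
  case 0 then show ?case by simp
next
  case (Suc r)
  have c0: "c 0 < p" using Suc by auto
  show ?case
  proof (cases i)
    case 0 then show ?thesis using c0 by (simp only: num_Suc) simp
  next
    case (Suc i')
    have p0: "p > 0" using c0 by simp
    have "(c 0 + p * (\<Sum>i<r. c (Suc i) * p^i)) div p^(Suc i') = ((c 0 + p * (\<Sum>i<r. c (Suc i) * p^i)) div p) div p^i'"
      by (simp add: div_mult2_eq)
    also have "\<dots> = (\<Sum>i<r. c (Suc i) * p^i) div p^i'" using c0 p0 by simp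
    finally have "(\<Sum>j<Suc r. c j * p^j) div p^i = (\<Sum>i<r. c (Suc i) * p^i) div p^i'"
      unfolding num_Suc Suc .
    then show ?thesis using Suc.IH[of "\<lambda>i. c (Suc i)" i'] Suc.prems Suc by simp
  qed
qed

lemma digit_expand: "x < (p::nat)^r \<Longrightarrow> 0 < p \<Longrightarrow> (\<Sum>i<r. (x div p^i mod p) * p^i) = x"
proof (induction r arbitrary: x)
  case 0 then show ?case by simp
next
  case (Suc r)
  have "x div p < p^r" using Suc.prems by (simp add: less_mult_imp_div_less mult.commute)
  then have ih: "(\<Sum>i<r. (x div p div p^i mod p) * p^i) = x div p" using Suc by auto
  have "(\<Sum>i<Suc r. (x div p^i mod p) * p^i) = x mod p + p * (\<Sum>i<r. (x div p^(Suc i) mod p) * p^i)"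
    by (subst num_Suc) simp
  also have "\<dots> = x mod p + p * (x div p)" using ih by (simp add: div_mult2_eq)
  finally show ?case by simp
qed

lemma digsum_0[simp]: "digsum p 0 = 0" by (subst digsum.simps) simp

lemma digsum_step: "1 < p \<Longrightarrow> c < p \<Longrightarrow> digsum p (c + p*y) = c + digsum p y"
proof (cases "c + p*y = 0")
  case True
  assume "1 < p" "c < p"
  then show ?thesis using True by simp
next
  case False
  assume a: "1 < p" "c < p"
  then show ?thesis using False by (subst digsum.simps) simp
qed

lemma digsum_num: "1 < p \<Longrightarrow> (\<forall>i<r. c i < p) \<Longrightarrow> digsum p (\<Sum>i<r. c i * p^i) = (\<Sum>i<r. c i)"
proof (induction r arbitrary: c)
  case 0 then show ?case by (simp add: digsum.simps)
next
  case (Suc r)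
  have "digsum p (\<Sum>i<Suc r. c i * p^i) = digsum p (c 0 + p * (\<Sum>i<r. c (Suc i) * p^i))"
    by (simp only: num_Suc)
  also have "\<dots> = c 0 + (\<Sum>i<r. c (Suc i))" using Suc by (simp add: digsum_step)
  finally show ?case by (simp only: sum.lessThan_Suc_shift)
qed

lemma shift_arith:
  assumes p: "2 \<le> p" and r: "1 \<le> r" and x: "x \<le> p^r - 1" and y: "y \<le> p^r - 1" and t: "t < p"
    and eq: "p*x + t = y + p^r*t"
  shows "shift p r x = y"
proof -
  have pr: "p^r \<ge> 2" using p r
  proof -
    have "p^1 \<le> p^r" using p r by (intro power_increasing) auto
    then show ?thesis using p by simp
  qed
  have eq2: "p*x = y + (p^r - 1)*t" using eq pr by (simp add: algebra_simps diff_mult_distrib)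
  show ?thesis
  proof (cases "x \<le> p^r - 2")
    case True
    have "y \<noteq> p^r - 1"
    proof
      assume yy: "y = p^r - 1"
      have "(p^r - 1)*(t+1) = (p^r-1)*t + (p^r - 1)" by (simp only: distrib_left mult_1_right)
      then have "p*x = (p^r - 1) * (t+1)" using eq2 yy by simp
      moreover obtain Q where Q: "p^r = Suc Q" using pr by (cases "p^r") auto
      ultimately have "p*x + (t+1) = p^r * (t+1)" by simp
      then have "p dvd (t+1)"
      proof -
        have "p dvd p^r * (t+1)" using r by (simp add: dvd_power)
        moreover note \<open>p*x + (t+1) = p^r * (t+1)\<close>
        ultimately have "p dvd p*x + (t+1)" by simp
        then show ?thesis using dvd_add_right_iff[of p "p*x" "t+1"] by simp
      qed
      then have "t + 1 = p" using t by (auto dest: dvd_imp_le)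
      then have "p*x = p*(p^r - 1)" using \<open>p*x = (p^r - 1) * (t+1)\<close> by simp
      then have "x = p^r - 1" using p by simp
      then show False using True pr by simp
    qed
    then have "y < p^r - 1" using y by simp
    then have "(p*x) mod (p^r - 1) = y" using eq2 by simp
    then show ?thesis using True by (simp add: shift_def)
  next
    case False
    then have xx: "x = p^r - 1" using x by simp
    have "p*(p^r-1) = y + (p^r - 1)*t" using eq2 xx by simp
    moreover have "(p^r-1)*(p-t) + (p^r-1)*t = (p^r-1)*p" using t by (simp add: add_mult_distrib2[symmetric])
    ultimately have "y = (p^r - 1)*(p - t)" by (simp add: mult.commute)
    moreover have "p - t \<ge> 1" using t by simp
    ultimately have "y \<ge> p^r - 1" by (metis mult_le_mono2 mult_1_right)
    then show ?thesis using y False by (simp add: shift_def)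
  qed
qed



definition numw :: "nat \<Rightarrow> nat \<Rightarrow> (nat \<Rightarrow> nat^'n \<Rightarrow> nat) \<Rightarrow> nat \<Rightarrow> nat^'n \<Rightarrow> nat" where
  "numw p r w s d = (\<Sum>j<r. w (s+j) d * p^j)"

lemma numw_per:
  assumes per: "\<forall>i. w (i+r) = w i"
  shows "numw p r w (s + r) d = numw p r w s d"
proof -
  have "w (s + r + j) = w (s + j)" for j using per[rule_format, of "s+j"] by (simp add: add_ac)
  then show ?thesis by (simp add: numw_def)
qed

lemma numw_step:
  assumes per: "\<forall>i. w (i+r) = w i"
  shows "p * numw p r w (Suc s) d + w s d = numw p r w s d + p^r * w s d"
proof -
  have "(\<Sum>j<Suc r. w (s+j) d * p^j) = w s d + p * numw p r w (Suc s) d"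
    unfolding num_Suc numw_def by simp
  moreover have "(\<Sum>j<Suc r. w (s+j) d * p^j) = numw p r w s d + w (s+r) d * p^r"
    by (simp add: numw_def)
  moreover have "w (s+r) = w s" using per by simp
  ultimately show ?thesis by (simp add: mult.commute)
qed

lemma numw_bound:
  assumes "\<forall>i. w i d < p"
  shows "numw p r w s d \<le> p^r - 1"
proof -
  have "numw p r w s d < p^r" unfolding numw_def by (rule num_bound) (use assms in auto)
  then show ?thesis by simp
qed

lemma shift_numw:
  assumes per: "\<forall>i. w (i+r) = w i" and dig: "\<forall>i. w i d < p" and p: "2 \<le> p" and r: "1 \<le> r"
  shows "shift p r (numw p r w s d) = numw p r w (s + (r-1)) d"
proof -
  have st: "p * numw p r w (Suc (s + (r-1))) d + w (s + (r-1)) d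
       = numw p r w (s + (r-1)) d + p^r * w (s + (r-1)) d"
    by (rule numw_step[OF per])
  have "Suc (s + (r-1)) = s + r" using r by simp
  then have "numw p r w (Suc (s + (r-1))) d = numw p r w s d" using numw_per[OF per] by simp
  with st have "p * numw p r w s d + w (s + (r-1)) d = numw p r w (s + (r-1)) d + p^r * w (s + (r-1)) d"
    by simp
  then show ?thesis
    by (intro shift_arith[OF p r numw_bound numw_bound]) (use dig in \<open>auto simp: mult.commute\<close>)
qed

lemma funpow_shift_numw:
  assumes per: "\<forall>i. w (i+r) = w i" and dig: "\<forall>i. w i d < p" and p: "2 \<le> p" and r: "1 \<le> r"
  shows "(shift p r ^^ n) (numw p r w s d) = numw p r w (s + n*(r-1)) d"
proof (induction n)
  case 0 then show ?case by simp
next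
  case (Suc n)
  then show ?case using shift_numw[OF per dig p r, of "s + n*(r-1)"] by (simp add: add_ac)
qed

lemma tele:
  fixes a :: "nat \<Rightarrow> nat^'n" and p :: nat and w :: "nat \<Rightarrow> nat^'n \<Rightarrow> nat"
  assumes ch: "\<forall>i j. p * a (Suc i) $ j = a i $ j + (\<Sum>d\<in>D. w i d * d $ j)"
  shows "p^k * a (s+k) $ j = a s $ j + (\<Sum>i<k. p^i * (\<Sum>d\<in>D. w (s+i) d * d $ j))"
proof (induction k)
  case 0 then show ?case by simp
next
  case (Suc k)
  have "p^(Suc k) * a (s + Suc k) $ j = p^k * (p * a (Suc (s+k)) $ j)" by simp
  also have "\<dots> = p^k * (a (s+k) $ j + (\<Sum>d\<in>D. w (s+k) d * d $ j))" using ch by simp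
  also have "\<dots> = a s $ j + (\<Sum>i<Suc k. p^i * (\<Sum>d\<in>D. w (s+i) d * d $ j))"
    using Suc by (simp add: algebra_simps)
  finally show ?case .
qed

lemma sum_numw:
  fixes a :: "nat \<Rightarrow> nat^'n" and p :: nat and w :: "nat \<Rightarrow> nat^'n \<Rightarrow> nat"
  assumes ch: "\<forall>i j. p * a (Suc i) $ j = a i $ j + (\<Sum>d\<in>D. w i d * d $ j)"
    and aper: "\<forall>i. a (i+r) = a i"
  shows "(\<Sum>d\<in>D. d $ j * numw p r w s d) = (p^r - 1) * a s $ j"
proof -
  have "(\<Sum>d\<in>D. d $ j * numw p r w s d) = (\<Sum>d\<in>D. \<Sum>i<r. p^i * (w (s+i) d * d $ j))"
    unfolding numw_def by (simp add: sum_distrib_left mult_ac)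
  also have "\<dots> = (\<Sum>i<r. p^i * (\<Sum>d\<in>D. w (s+i) d * d $ j))"
    by (subst sum.swap) (simp add: sum_distrib_left)
  finally have e: "(\<Sum>d\<in>D. d $ j * numw p r w s d) = (\<Sum>i<r. p^i * (\<Sum>d\<in>D. w (s+i) d * d $ j))" .
  have "p^r * a (s+r) $ j = a s $ j + (\<Sum>i<r. p^i * (\<Sum>d\<in>D. w (s+i) d * d $ j))"
    by (rule tele[OF ch])
  then have "p^r * a s $ j = a s $ j + (\<Sum>d\<in>D. d $ j * numw p r w s d)" using aper e by simp
  then show ?thesis by (simp add: diff_mult_distrib)
qed



type_synonym 'n edge = "(nat^'n \<Rightarrow> nat) \<times> (nat^'n) \<times> (nat^'n)"

definition edgeok :: "(nat^'n) set \<Rightarrow> nat \<Rightarrow> 'n edge \<Rightarrow> bool" where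
  "edgeok D p e \<longleftrightarrow> (\<forall>d\<in>D. fst e d < p) \<and>
     (\<forall>j. p * snd (snd e) $ j = fst (snd e) $ j + (\<Sum>d\<in>D. fst e d * d $ j))"

fun wk :: "(nat^'n) set \<Rightarrow> nat \<Rightarrow> nat^'n \<Rightarrow> 'n edge list \<Rightarrow> nat^'n \<Rightarrow> bool" where
  "wk D p u [] v \<longleftrightarrow> u = v"
| "wk D p u (e#es) v \<longleftrightarrow> edgeok D p e \<and> fst (snd e) = u \<and> wk D p (snd (snd e)) es v"

definition closedw :: "(nat^'n) set \<Rightarrow> nat \<Rightarrow> 'n edge list \<Rightarrow> bool" where
  "closedw D p xs \<longleftrightarrow> xs \<noteq> [] \<and> wk D p (fst (snd (hd xs))) xs (fst (snd (hd xs))) \<and>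
     (\<forall>e\<in>set xs. \<forall>j. 0 < fst (snd e) $ j)"

definition wt :: "(nat^'n) set \<Rightarrow> 'n edge list \<Rightarrow> nat" where
  "wt D xs = sum_list (map (\<lambda>e. \<Sum>d\<in>D. fst e d) xs)"

definition Ul :: "(nat^'n) set \<Rightarrow> nat \<Rightarrow> 'n edge list \<Rightarrow> nat^'n \<Rightarrow> nat" where
  "Ul D p xs = (\<lambda>d\<in>D. \<Sum>i<length xs. fst (xs!i) d * p^i)"

lemma wk_append: "wk D p u (xs@ys) v \<longleftrightarrow> (\<exists>m. wk D p u xs m \<and> wk D p m ys v)"
  by (induction xs arbitrary: u) auto

lemma wk_nth: "wk D p u xs v \<Longrightarrow> k < length xs \<Longrightarrow> edgeok D p (xs!k) \<and>
   snd (snd (xs!k)) = (if Suc k < length xs then fst (snd (xs ! Suc k)) else v)"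
proof (induction xs arbitrary: u k)
  case Nil then show ?case by simp
next
  case (Cons e es)
  show ?case
  proof (cases k)
    case 0 then show ?thesis using Cons by (cases es) auto
  next
    case (Suc k') then show ?thesis using Cons by auto
  qed
qed

lemma wk_hd: "wk D p u xs v \<Longrightarrow> xs \<noteq> [] \<Longrightarrow> fst (snd (xs!0)) = u"
  by (cases xs) auto

lemma wt_nth: "wt D xs = (\<Sum>i<length xs. \<Sum>d\<in>D. fst (xs!i) d)"
  unfolding wt_def sum_list_sum_nth by (simp add: lessThan_atLeast0)

lemma int_mod_lemma:
  assumes r: "1 \<le> r"
  shows "(nat (k mod int r) * (r-1)) mod r = nat ((-k) mod int r)"
proof -
  have "int ((nat (k mod int r) * (r-1)) mod r) = (int (nat (k mod int r)) * (int r - 1)) mod int r"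
    using r by (simp add: zmod_int of_nat_diff)
  also have "\<dots> = ((k mod int r) * (int r - 1)) mod int r" using r by simp
  also have "\<dots> = (k * (int r - 1)) mod int r" by (simp add: mod_mult_left_eq)
  also have "\<dots> = ((-k) + k * int r) mod int r" by (simp add: algebra_simps)
  also have "\<dots> = (-k) mod int r" by (rule mod_mult_self1)
  finally show ?thesis by (metis nat_int)
qed

lemma I1:
  fixes D :: "(nat^'n) set" and xs :: "'n edge list"
  assumes cl: "closedw D p xs" and p: "2 \<le> p"
  defines "r \<equiv> length xs"
  shows "Ul D p xs \<in> E D p r" "sU p D (Ul D p xs) = wt D xs"
    "\<And>k. supp D p r (Ul D p xs) k = fst (snd (xs ! nat ((-k) mod int r)))"
    "psi D p (Ul D p xs) = restrict (fst (hd xs)) D"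
    "\<And>i d. i < r \<Longrightarrow> d \<in> D \<Longrightarrow> Ul D p xs d div p^i mod p = fst (xs!i) d"
proof -
  define w where "w i = fst (xs ! (i mod r))" for i
  define a where "a i = fst (snd (xs ! (i mod r)))" for i
  have ne: "xs \<noteq> []" and wkx: "wk D p (fst (snd (hd xs))) xs (fst (snd (hd xs)))"
    and pos: "\<forall>e\<in>set xs. \<forall>j. 0 < fst (snd e) $ j" using cl unfolding closedw_def by auto
  have r: "1 \<le> r" using ne r_def by (cases xs) auto
  have hd0: "hd xs = xs!0" using ne by (simp add: hd_conv_nth)
  have per: "\<forall>i. w (i+r) = w i" unfolding w_def by simp
  have aper: "\<forall>i. a (i+r) = a i" unfolding a_def by simp
  have edges: "\<And>k. k < r \<Longrightarrow> edgeok D p (xs!k)" using wk_nth[OF wkx] r_def by blast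
  have dig: "\<forall>i. w i d < p" if "d \<in> D" for d
  proof
    fix i
    have "i mod r < r" using r by simp
    then show "w i d < p" using edges[of "i mod r"] that unfolding w_def edgeok_def by auto
  qed
  have ch: "\<forall>i j. p * a (Suc i) $ j = a i $ j + (\<Sum>d\<in>D. w i d * d $ j)"
  proof (intro allI)
    fix i j
    define k where "k = i mod r"
    have k: "k < r" using r k_def by simp
    have e: "edgeok D p (xs!k)" using edges k by simp
    have hi: "snd (snd (xs!k)) = (if Suc k < r then fst (snd (xs ! Suc k)) else fst (snd (hd xs)))"
      using wk_nth[OF wkx, of k] k r_def by simp
    have "a (Suc i) = snd (snd (xs!k))"
      unfolding a_def hi using k by (auto simp: mod_Suc k_def hd0)
    then show "p * a (Suc i) $ j = a i $ j + (\<Sum>d\<in>D. w i d * d $ j)"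
      using e unfolding edgeok_def a_def w_def k_def by simp
  qed
  have Ueq: "Ul D p xs d = numw p r w 0 d" if "d \<in> D" for d
    using that unfolding Ul_def numw_def w_def r_def by (auto intro: sum.cong)
  have Ueq': "Ul D p xs = (\<lambda>d\<in>D. numw p r w 0 d)"
    unfolding Ul_def numw_def w_def r_def by (auto intro!: restrict_ext sum.cong)
  have pr: "p^r \<ge> 2"
  proof -
    have "p^1 \<le> p^r" using p r by (intro power_increasing) auto
    then show ?thesis using p by simp
  qed
  have apos: "0 < a 0 $ j" for j using pos ne unfolding a_def by auto
  show "Ul D p xs \<in> E D p r"
  proof -
    have "Ul D p xs \<in> D \<rightarrow>\<^sub>E {0..p^r - 1}"
    proof -
      have bnd: "\<And>d. d\<in>D \<Longrightarrow> numw p r w 0 d \<le> p^r - 1" using dig numw_bound by blast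
      show ?thesis unfolding Ueq' restrict_PiE_iff using bnd by simp
    qed
    moreover have "wsum D (Ul D p xs) $ j = (p^r - 1) * a 0 $ j" for j
    proof -
      have "wsum D (Ul D p xs) $ j = (\<Sum>d\<in>D. d $ j * numw p r w 0 d)"
        unfolding wsum_def using Ueq by (simp add: mult.commute)
      also have "\<dots> = (p^r - 1) * a 0 $ j" by (rule sum_numw[OF ch aper])
      finally show ?thesis .
    qed
    moreover have "0 < (p^r - 1) * a 0 $ j" for j using pr apos by simp
    ultimately show ?thesis unfolding E_def by auto
  qed
  show "sU p D (Ul D p xs) = wt D xs"
  proof -
    have "sU p D (Ul D p xs) = (\<Sum>d\<in>D. \<Sum>i<r. fst (xs!i) d)"
      unfolding sU_def
    proof (rule sum.cong)
      fix d assume d: "d \<in> D"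
      have "\<forall>i<r. fst (xs!i) d < p" using edges d unfolding edgeok_def by auto
      then show "digsum p (Ul D p xs d) = (\<Sum>i<r. fst (xs!i) d)"
        using d p unfolding Ul_def r_def by (simp add: digsum_num)
    qed simp
    also have "\<dots> = wt D xs" unfolding wt_nth r_def by (rule sum.swap)
    finally show ?thesis .
  qed
  show "supp D p r (Ul D p xs) k = fst (snd (xs ! nat ((-k) mod int r)))" for k
  proof -
    define t where "t = nat (k mod int r)"
    have "supp D p r (Ul D p xs) k $ j = a (0 + t*(r-1)) $ j" for j
    proof -
      have "supp D p r (Ul D p xs) k $ j = (\<Sum>d\<in>D. d $ j * (shift p r ^^ t) (Ul D p xs d)) div (p^r - 1)"
        unfolding supp_def t_def by simp
      also have "\<dots> = (\<Sum>d\<in>D. d $ j * numw p r w (0 + t*(r-1)) d) div (p^r - 1)"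
        using Ueq funpow_shift_numw[OF per dig p r] by (simp cong: sum.cong)
      also have "\<dots> = a (0 + t*(r-1)) $ j" using sum_numw[OF ch aper] pr by simp
      finally show ?thesis .
    qed
    then have "supp D p r (Ul D p xs) k = a (t*(r-1))" by (simp add: vec_eq_iff)
    also have "\<dots> = fst (snd (xs ! nat ((-k) mod int r)))"
      unfolding a_def t_def using int_mod_lemma[OF r] by simp
    finally show ?thesis .
  qed
  show "psi D p (Ul D p xs) = restrict (fst (hd xs)) D"
  proof -
    have "Ul D p xs d mod p = fst (xs!0) d" if d: "d \<in> D" for d
    proof -
      have "\<forall>i<r. fst (xs!i) d < p" using edges d unfolding edgeok_def by auto
      then show ?thesis using num_digit[of r "\<lambda>i. fst (xs!i) d" p 0] r d ne unfolding Ul_def r_def by simp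
    qed
    then show ?thesis unfolding psi_def hd0 by (auto intro: restrict_ext)
  qed
  show "Ul D p xs d div p^i mod p = fst (xs!i) d" if "i < r" "d \<in> D" for i d
  proof -
    have "\<forall>i<r. fst (xs!i) d < p" using edges that unfolding edgeok_def by auto
    then show ?thesis using num_digit[of r "\<lambda>i. fst (xs!i) d" p i] that unfolding Ul_def r_def by simp
  qed
qed



lemma I2:
  fixes D :: "(nat^'n) set" and U :: "nat^'n \<Rightarrow> nat"
  assumes UE: "U \<in> E D p r" and r: "1 \<le> r" and p: "2 \<le> p"
  shows "\<exists>xs. closedw D p xs \<and> length xs = r \<and> Ul D p xs = U \<and>
          (\<forall>i<r. fst (xs!i) = (\<lambda>d\<in>D. U d div p^i mod p))"
proof -
  define w where "w i = (\<lambda>d\<in>D. U d div p^(i mod r) mod p)" for i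
  have per: "\<forall>i. w (i+r) = w i" unfolding w_def by simp
  have dig: "\<forall>i. w i d < p" if "d \<in> D" for d using p that unfolding w_def by auto
  have UPi: "U \<in> D \<rightarrow>\<^sub>E {0..p^r - 1}" and Udiv: "\<forall>j. wsum D U $ j mod (p^r - 1) = 0"
    and Upos: "\<forall>j. 0 < wsum D U $ j" using UE unfolding E_def by auto
  have pr: "p^r \<ge> 2"
  proof -
    have "p^1 \<le> p^r" using p r by (intro power_increasing) auto
    then show ?thesis using p by simp
  qed
  have numw0: "numw p r w 0 d = U d" if d: "d \<in> D" for d
  proof -
    have "U d \<le> p^r - 1" using UPi d by auto
    then have lt: "U d < p^r" using pr by simp
    have "numw p r w 0 d = (\<Sum>i<r. (U d div p^i mod p) * p^i)"
      unfolding numw_def w_def using d by (auto intro: sum.cong)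
    also have "\<dots> = U d" using digit_expand[OF lt] p by simp
    finally show ?thesis .
  qed
  define S where "S s j = (\<Sum>d\<in>D. d $ j * numw p r w s d)" for s j
  define X where "X s j = (\<Sum>d\<in>D. d $ j * w s d)" for s j
  have step: "p * S (Suc s) j + X s j = S s j + p^r * X s j" for s j
  proof -
    have e: "p * (d $ j * numw p r w (Suc s) d) + d $ j * w s d = d $ j * numw p r w s d + p^r * (d $ j * w s d)" for d
    proof -
      have "d $ j * (p * numw p r w (Suc s) d + w s d) = d $ j * (numw p r w s d + p^r * w s d)"
        using numw_step[OF per] by simp
      then show ?thesis by (simp add: algebra_simps)
    qed
    have "p * S (Suc s) j + X s j = (\<Sum>d\<in>D. p * (d $ j * numw p r w (Suc s) d) + d $ j * w s d)"
      unfolding S_def X_def by (simp add: sum.distrib sum_distrib_left)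
    also have "\<dots> = (\<Sum>d\<in>D. d $ j * numw p r w s d + p^r * (d $ j * w s d))" using e by simp
    also have "\<dots> = S s j + p^r * X s j"
      unfolding S_def X_def by (simp add: sum.distrib sum_distrib_left)
    finally show ?thesis .
  qed
  have step2: "p * S (Suc s) j = S s j + (p^r - 1) * X s j" for s j
  proof -
    obtain Q where Q: "p^r = Suc Q" using pr by (cases "p^r") auto
    show ?thesis using step[of s j] unfolding Q by simp
  qed
  have cop: "coprime (p^r - 1) p"
  proof -
    have "coprime (p^r - 1) (p^r)" using p by (intro coprime_diff_one_left_nat) simp
    then show ?thesis using r by (simp add: coprime_power_right_iff)
  qed
  have S0: "S 0 j = wsum D U $ j" for j
    unfolding S_def wsum_def using numw0 by (simp add: mult.commute)
  have dvd: "(p^r - 1) dvd S s j" for s j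
  proof (induction s)
    case 0 then show ?case using Udiv S0 by (simp add: dvd_eq_mod_eq_0)
  next
    case (Suc s)
    then have "(p^r - 1) dvd p * S (Suc s) j" using step2 by simp
    then show ?case using cop by (simp add: coprime_dvd_mult_right_iff)
  qed
  define a where "a s = (\<chi> j. S s j div (p^r - 1))" for s
  have Sa: "S s j = (p^r - 1) * a s $ j" for s j
    unfolding a_def using dvd by simp
  have ch: "\<forall>i j. p * a (Suc i) $ j = a i $ j + (\<Sum>d\<in>D. w i d * d $ j)"
  proof (intro allI)
    fix i j
    have "(p^r - 1) * (p * a (Suc i) $ j) = (p^r - 1) * (a i $ j + X i j)"
      using step2[of i j] Sa by (simp add: algebra_simps)
    then have "p * a (Suc i) $ j = a i $ j + X i j" using pr by simp
    then show "p * a (Suc i) $ j = a i $ j + (\<Sum>d\<in>D. w i d * d $ j)"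
      unfolding X_def by (simp add: mult.commute)
  qed
  have aper: "\<forall>i. a (i+r) = a i"
    unfolding a_def S_def using numw_per[OF per] by simp
  have pos: "0 < a s $ j" for s j
  proof (induction s)
    case 0
    have "0 < S 0 j" using S0 Upos by simp
    then show ?case using Sa[of 0 j] by (metis mult_0_right neq0_conv)
  next
    case (Suc s)
    have "p * a (Suc s) $ j \<ge> a s $ j" using ch by simp
    then show ?case using Suc by (metis mult_0_right neq0_conv not_le)
  qed
  define f where "f i = (w i, a i, a (Suc i))" for i
  have wkl: "wk D p (a s) (map f [s..<s+k]) (a (s+k))" for s k
  proof (induction k)
    case 0 then show ?case by simp
  next
    case (Suc k)
    have "edgeok D p (f (s+k))" unfolding f_def edgeok_def using dig ch by simp
    then show ?case using Suc by (auto simp: f_def wk_append)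
  qed
  define xs where "xs = map f [0..<r]"
  have len: "length xs = r" unfolding xs_def by simp
  have ne: "xs \<noteq> []" using r unfolding xs_def by simp
  have hd: "fst (snd (hd xs)) = a 0" using r unfolding xs_def f_def by (simp add: hd_map)
  have "wk D p (a 0) xs (a 0)" using wkl[of 0 r] aper[rule_format, of 0] unfolding xs_def by simp
  moreover have "\<forall>e\<in>set xs. \<forall>j. 0 < fst (snd e) $ j" unfolding xs_def f_def using pos by auto
  ultimately have cl: "closedw D p xs" unfolding closedw_def using ne hd by simp
  have nth: "fst (xs!i) = w i" if "i < r" for i using that unfolding xs_def f_def by simp
  have "Ul D p xs = U"
  proof (rule ext)
    fix d
    show "Ul D p xs d = U d"
    proof (cases "d \<in> D")
      case True
      then have "Ul D p xs d = numw p r w 0 d" unfolding Ul_def numw_def len using nth by simp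
      then show ?thesis using numw0 True by simp
    next
      case False
      then show ?thesis using UPi unfolding Ul_def by (auto simp: PiE_def extensional_def)
    qed
  qed
  moreover have "\<forall>i<r. fst (xs!i) = (\<lambda>d\<in>D. U d div p^i mod p)" using nth unfolding w_def by simp
  ultimately show ?thesis using cl len by blast
qed



definition Iv :: "(nat^'n) set \<Rightarrow> nat \<Rightarrow> real" where
  "Iv D p = Inf {real (sU p D U) / real r | r U. r \<ge> 1 \<and> U \<in> E D p r}"

lemma Iv_le: "U \<in> E D p r \<Longrightarrow> 1 \<le> r \<Longrightarrow> Iv D p \<le> real (sU p D U) / real r"
  unfolding Iv_def
  by (rule cInf_lower) (auto intro: bdd_belowI[where m=0])

lemma minimal_iff: "2 \<le> p \<Longrightarrow> minimal D p r U \<longleftrightarrow> U \<in> E D p r \<and> real (sU p D U) = real r * Iv D p"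
  unfolding minimal_def delta_def Iv_def by auto

lemma LB:
  assumes "closedw D p xs" "2 \<le> p"
  shows "real (length xs) * Iv D p \<le> real (wt D xs)"
proof -
  have "xs \<noteq> []" using assms unfolding closedw_def by simp
  then have r: "1 \<le> length xs" by (cases xs) auto
  have "Iv D p \<le> real (sU p D (Ul D p xs)) / real (length xs)"
    using Iv_le[OF I1(1)[OF assms] r] .
  then have h: "Iv D p \<le> real (wt D xs) / real (length xs)" using I1(2)[OF assms] \<open>xs \<noteq> []\<close> by simp
  have "0 < real (length xs)" using \<open>xs \<noteq> []\<close> by simp
  from pos_le_divide_eq[OF this, THEN iffD1, OF h] show ?thesis by (simp add: mult.commute)
qed

lemma wk_split:
  assumes "wk D p u xs v" "n \<le> length xs"
  defines "vt \<equiv> (if n < length xs then fst (snd (xs!n)) else v)"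
  shows "wk D p u (take n xs) vt \<and> wk D p vt (drop n xs) v"
proof -
  have "wk D p u (take n xs @ drop n xs) v" using assms by simp
  then obtain m where m: "wk D p u (take n xs) m" "wk D p m (drop n xs) v" unfolding wk_append by blast
  have "m = vt"
  proof (cases "n < length xs")
    case True
    then have "drop n xs \<noteq> []" by simp
    then have "fst (snd (drop n xs ! 0)) = m" using wk_hd[OF m(2)] by simp
    then show ?thesis using True unfolding vt_def by simp
  next
    case False
    then have "drop n xs = []" using assms by simp
    then show ?thesis using m False unfolding vt_def by simp
  qed
  then show ?thesis using m by simp
qed

lemma closed_sub:
  assumes "closedw D p xs" "wk D p u ys u" "ys \<noteq> []" "set ys \<subseteq> set xs"
  shows "closedw D p ys"
proof -
  have "fst (snd (hd ys)) = u" using wk_hd[OF assms(2,3)] assms(3) by (simp add: hd_conv_nth)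
  then show ?thesis using assms unfolding closedw_def by auto
qed

lemma wt_append[simp]: "wt D (xs @ ys) = wt D xs + wt D ys" unfolding wt_def by simp

lemma min_parts:
  assumes "closedw D p A" "closedw D p B" "2 \<le> p"
    and "wt D xs = wt D A + wt D B" "length xs = length A + length B"
    and "real (wt D xs) = real (length xs) * Iv D p"
  shows "real (wt D A) = real (length A) * Iv D p" "real (wt D B) = real (length B) * Iv D p"
proof -
  have a: "real (length A) * Iv D p \<le> real (wt D A)" by (rule LB[OF assms(1,3)])
  have b: "real (length B) * Iv D p \<le> real (wt D B)" by (rule LB[OF assms(2,3)])
  have "real (wt D A) + real (wt D B) = (real (length A) + real (length B)) * Iv D p"
    using assms(4-6) by simp
  then show "real (wt D A) = real (length A) * Iv D p" "real (wt D B) = real (length B) * Iv D p"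
    using a b by (simp_all add: algebra_simps)
qed

lemma split_simple:
  assumes "closedw D p xs" "2 \<le> p" "real (wt D xs) = real (length xs) * Iv D p"
  shows "\<exists>C. closedw D p C \<and> real (wt D C) = real (length C) * Iv D p \<and> hd C = hd xs \<and>
           distinct (map (\<lambda>e. fst (snd e)) C)"
  using assms
proof (induction "length xs" arbitrary: xs rule: less_induct)
  case less
  note cl = less.prems(1) and p = less.prems(2) and mn = less.prems(3)
  show ?case
  proof (cases "distinct (map (\<lambda>e. fst (snd e)) xs)")
    case True then show ?thesis using less.prems by blast
  next
    case False
    then obtain j k where jk: "j < k" "k < length xs" "fst (snd (xs!j)) = fst (snd (xs!k))"
      unfolding distinct_conv_nth by (auto simp: nat_neq_iff)
    define u where "u = fst (snd (hd xs))"
    have ne: "xs \<noteq> []" and wkx: "wk D p u xs u" using cl unfolding closedw_def u_def by auto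
    have hd0: "hd xs = xs!0" using ne by (simp add: hd_conv_nth)
    have s1: "wk D p u (take k xs) (fst (snd (xs!k)))" "wk D p (fst (snd (xs!k))) (drop k xs) u"
      using wk_split[OF wkx, of k] jk by auto
    have tk: "length (take k xs) = k" using jk by simp
    show ?thesis
    proof (cases "j = 0")
      case True
      have uk: "fst (snd (xs!k)) = u" using jk True hd0 u_def by simp
      define A where "A = take k xs"
      define B where "B = drop k xs"
      have wA: "wk D p u A u" using s1(1) uk unfolding A_def by simp
      have wB: "wk D p u B u" using s1(2) uk unfolding B_def by simp
      have clA: "closedw D p A" using closed_sub[OF cl wA] jk True ne
        unfolding A_def by (auto simp: set_take_subset)
      have clB: "closedw D p B" using closed_sub[OF cl wB] jk
        unfolding B_def by (auto simp: set_drop_subset)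
      have "wt D xs = wt D A + wt D B" unfolding A_def B_def
        by (metis append_take_drop_id wt_append)
      moreover have "length xs = length A + length B" unfolding A_def B_def using jk by simp
      ultimately have mA: "real (wt D A) = real (length A) * Iv D p"
        using min_parts(1)[OF clA clB p _ _ mn] by simp
      have "length A < length xs" unfolding A_def using jk by simp
      then obtain C where C: "closedw D p C \<and> real (wt D C) = real (length C) * Iv D p \<and> hd C = hd A \<and>
           distinct (map (\<lambda>e. fst (snd e)) C)" using less.hyps[OF _ clA p mA] by blast
      have "hd A = hd xs" unfolding A_def using jk True ne by (simp add: hd_conv_nth)
      then show ?thesis using C by auto
    next
      case False
      have s2: "wk D p u (take j (take k xs)) (fst (snd (xs!j)))"
        "wk D p (fst (snd (xs!j))) (drop j (take k xs)) (fst (snd (xs!k)))"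
        using wk_split[OF s1(1), of j] jk tk by auto
      define A where "A = take j xs @ drop k xs"
      define B where "B = drop j (take k xs)"
      have wA: "wk D p u A u" unfolding A_def wk_append using s2(1) s1(2) jk(3) jk(1)
        by (auto simp: min_def)
      have clA: "closedw D p A" using closed_sub[OF cl wA] False jk ne
        unfolding A_def by (auto dest: in_set_takeD in_set_dropD)
      have clB: "closedw D p B" using closed_sub[OF cl, of "fst (snd (xs!j))" B] s2(2) jk
        unfolding B_def by (auto dest: in_set_takeD in_set_dropD)
      have tt: "take k xs = take j xs @ B" unfolding B_def using jk
        by (metis append_take_drop_id min.strict_order_iff take_take)
      have "xs = take j xs @ B @ drop k xs" using tt by (metis append.assoc append_take_drop_id)
      then have "wt D xs = wt D A + wt D B" unfolding A_def by (metis add.commute add.left_commute wt_append)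
      moreover have "length xs = length A + length B" unfolding A_def B_def using jk by simp
      ultimately have mA: "real (wt D A) = real (length A) * Iv D p"
        using min_parts(1)[OF clA clB p _ _ mn] by simp
      have "length A < length xs" unfolding A_def using jk by simp
      then obtain C where C: "closedw D p C \<and> real (wt D C) = real (length C) * Iv D p \<and> hd C = hd A \<and>
           distinct (map (\<lambda>e. fst (snd e)) C)" using less.hyps[OF _ clA p mA] by blast
      have "take j xs \<noteq> []" using False ne by simp
      then have "hd A = hd (take j xs)" unfolding A_def by simp
      also have "\<dots> = hd xs" using False ne by (simp add: hd_take)
      finally have "hd A = hd xs" .
      then show ?thesis using C by auto
    qed
  qed
qed

lemma rotate_closed:
  assumes cl: "closedw D p xs" and i: "i < length xs"
  shows "closedw D p (drop i xs @ take i xs) \<and> hd (drop i xs @ take i xs) = xs!i \<and>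
     wt D (drop i xs @ take i xs) = wt D xs \<and> length (drop i xs @ take i xs) = length xs"
proof -
  define u where "u = fst (snd (hd xs))"
  have wkx: "wk D p u xs u" using cl unfolding closedw_def u_def by auto
  have s: "wk D p u (take i xs) (fst (snd (xs!i)))" "wk D p (fst (snd (xs!i))) (drop i xs) u"
    using wk_split[OF wkx, of i] i by auto
  have w: "wk D p (fst (snd (xs!i))) (drop i xs @ take i xs) (fst (snd (xs!i)))"
    unfolding wk_append using s by blast
  have "closedw D p (drop i xs @ take i xs)"
    using closed_sub[OF cl w] i by (auto dest: in_set_takeD in_set_dropD)
  moreover have "hd (drop i xs @ take i xs) = xs!i" using i by (simp add: hd_drop_conv_nth)
  moreover have "wt D (drop i xs @ take i xs) = wt D xs"
    by (metis add.commute append_take_drop_id wt_append)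
  ultimately show ?thesis by simp
qed



lemma wt_Nil[simp]: "wt D [] = 0" unfolding wt_def by simp

lemma wt_Cons[simp]: "wt D (e # es) = (\<Sum>d\<in>D. fst e d) + wt D es" unfolding wt_def by simp

lemma min_glue:
  assumes cl: "closedw D p xs" and p: "2 \<le> p"
    and all: "\<forall>i<length xs. \<exists>C. closedw D p C \<and> real (wt D C) = real (length C) * Iv D p \<and> hd C = xs!i"
  shows "real (wt D xs) = real (length xs) * Iv D p"
proof -
  define n where "n = length xs"
  define Q where "Q i C \<longleftrightarrow> closedw D p C \<and> real (wt D C) = real (length C) * Iv D p \<and> hd C = xs!i" for i C
  define Cf where "Cf i = (SOME C. Q i C)" for i
  have Cf: "Q i (Cf i)" if "i < n" for i
  proof -
    have "\<exists>C. Q i C" using all that unfolding Q_def n_def by blast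
    then show ?thesis unfolding Cf_def by (rule someI_ex)
  qed
  define u where "u = fst (snd (hd xs))"
  have ne: "xs \<noteq> []" and wkx: "wk D p u xs u" using cl unfolding closedw_def u_def by auto
  have n0: "0 < n" using ne n_def by simp
  define vt where "vt i = (if i < n then fst (snd (xs!i)) else u)" for i
  have vt0: "vt 0 = u" unfolding vt_def u_def using n0 ne by (simp add: hd_conv_nth)
  have vtn: "vt n = u" unfolding vt_def by simp
  have hi: "snd (snd (xs!i)) = vt (Suc i)" if "i < n" for i
    using wk_nth[OF wkx, of i] that unfolding vt_def n_def by simp
  define ew where "ew e = (\<Sum>d\<in>D. fst e d)" for e :: "'a edge"
  define P where "P i = tl (Cf i)" for i
  have Pwk: "wk D p (vt (Suc i)) (P i) (vt i)" and Pwt: "wt D (Cf i) = ew (xs!i) + wt D (P i)"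
    and Plen: "length (Cf i) = Suc (length (P i))" and Pset: "set (P i) \<subseteq> set (Cf i)"
    if i: "i < n" for i
  proof -
    have c: "closedw D p (Cf i)" and h: "hd (Cf i) = xs!i" using Cf[OF i] unfolding Q_def by auto
    have cne: "Cf i \<noteq> []" using c unfolding closedw_def by simp
    then have eq: "Cf i = hd (Cf i) # tl (Cf i)" by simp
    have "wk D p (fst (snd (hd (Cf i)))) (Cf i) (fst (snd (hd (Cf i))))" using c unfolding closedw_def by simp
    then have "wk D p (snd (snd (hd (Cf i)))) (tl (Cf i)) (fst (snd (hd (Cf i))))"
      by (subst (asm) eq) simp
    then show "wk D p (vt (Suc i)) (P i) (vt i)" unfolding P_def h using hi[OF i] i vt_def by simp
    show "wt D (Cf i) = ew (xs!i) + wt D (P i)" unfolding P_def ew_def using h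
      by (subst eq) simp
    show "length (Cf i) = Suc (length (P i))" unfolding P_def using cne by simp
    show "set (P i) \<subseteq> set (Cf i)" unfolding P_def by (simp add: list.set_sel(2) subsetI cne)
  qed
  define R where "R k = concat (map P (rev [0..<k]))" for k
  have ind: "k \<le> n \<longrightarrow> wk D p (vt k) (R k) (vt 0) \<and> wt D (R k) + (\<Sum>i<k. ew (xs!i)) = (\<Sum>i<k. wt D (Cf i))
     \<and> length (R k) + k = (\<Sum>i<k. length (Cf i)) \<and> set (R k) \<subseteq> (\<Union>i<k. set (Cf i))" for k
  proof (induction k)
    case 0 then show ?case unfolding R_def by simp
  next
    case (Suc k)
    show ?case
    proof
      assume k: "Suc k \<le> n"
      then have kn: "k < n" by simp
      have Rs: "R (Suc k) = P k @ R k" unfolding R_def by simp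
      show "wk D p (vt (Suc k)) (R (Suc k)) (vt 0) \<and> wt D (R (Suc k)) + (\<Sum>i<Suc k. ew (xs!i)) = (\<Sum>i<Suc k. wt D (Cf i))
       \<and> length (R (Suc k)) + Suc k = (\<Sum>i<Suc k. length (Cf i)) \<and> set (R (Suc k)) \<subseteq> (\<Union>i<Suc k. set (Cf i))"
      proof (intro conjI)
        have IH: "wk D p (vt k) (R k) (vt 0)" "wt D (R k) + (\<Sum>i<k. ew (xs!i)) = (\<Sum>i<k. wt D (Cf i))"
          "length (R k) + k = (\<Sum>i<k. length (Cf i))" "set (R k) \<subseteq> (\<Union>i<k. set (Cf i))"
          using Suc.IH kn by auto
        show "wk D p (vt (Suc k)) (R (Suc k)) (vt 0)" unfolding Rs wk_append using IH(1) Pwk[OF kn] by blast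
        show "wt D (R (Suc k)) + (\<Sum>i<Suc k. ew (xs!i)) = (\<Sum>i<Suc k. wt D (Cf i))"
          unfolding Rs using IH(2) Pwt[OF kn] by simp
        show "length (R (Suc k)) + Suc k = (\<Sum>i<Suc k. length (Cf i))"
          unfolding Rs using IH(3) Plen[OF kn] by simp
        show "set (R (Suc k)) \<subseteq> (\<Union>i<Suc k. set (Cf i))"
          unfolding Rs using IH(4) Pset[OF kn] by (auto simp: lessThan_Suc)
      qed
    qed
  qed
  have Rn: "wk D p u (R n) u" and Rwt: "wt D (R n) + (\<Sum>i<n. ew (xs!i)) = (\<Sum>i<n. wt D (Cf i))"
    and Rlen: "length (R n) + n = (\<Sum>i<n. length (Cf i))" and Rset: "set (R n) \<subseteq> (\<Union>i<n. set (Cf i))"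
    using ind[of n] vt0 vtn by auto
  have wtx: "wt D xs = (\<Sum>i<n. ew (xs!i))" unfolding wt_nth n_def ew_def by simp
  have LBR: "real (length (R n)) * Iv D p \<le> real (wt D (R n))"
  proof (cases "R n = []")
    case True then show ?thesis by simp
  next
    case False
    have "fst (snd (hd (R n))) = u" using wk_hd[OF Rn False] False by (simp add: hd_conv_nth)
    moreover have "\<forall>e\<in>set (R n). \<forall>j. 0 < fst (snd e) $ j"
    proof
      fix e assume "e \<in> set (R n)"
      then obtain i where "i < n" "e \<in> set (Cf i)" using Rset by auto
      then show "\<forall>j. 0 < fst (snd e) $ j" using Cf[of i] unfolding Q_def closedw_def by auto
    qed
    ultimately have "closedw D p (R n)" using Rn False unfolding closedw_def by simp
    then show ?thesis by (rule LB[OF _ p])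
  qed
  have "real (wt D (R n)) + real (wt D xs) = (\<Sum>i<n. real (wt D (Cf i)))"
    using Rwt wtx by (metis of_nat_add of_nat_sum)
  also have "\<dots> = (\<Sum>i<n. real (length (Cf i)) * Iv D p)"
    by (intro sum.cong refl) (use Cf in \<open>simp add: Q_def\<close>)
  also have "\<dots> = real (\<Sum>i<n. length (Cf i)) * Iv D p" by (simp add: sum_distrib_right)
  also have "\<dots> = (real (length (R n)) + real n) * Iv D p" using Rlen by (metis of_nat_add)
  finally have "real (wt D xs) \<le> real n * Iv D p" using LBR by (simp add: algebra_simps)
  moreover have "real n * Iv D p \<le> real (wt D xs)" using LB[OF cl p] n_def by simp
  ultimately show ?thesis using n_def by simp
qed



lemma hi_nth:
  assumes cl: "closedw D p xs" and i: "i < length xs"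
  shows "snd (snd (xs!i)) = fst (snd (xs ! nat ((int i + 1) mod int (length xs))))"
proof -
  have ne: "xs \<noteq> []" and wkx: "wk D p (fst (snd (hd xs))) xs (fst (snd (hd xs)))"
    using cl unfolding closedw_def by auto
  have h: "snd (snd (xs!i)) = (if Suc i < length xs then fst (snd (xs ! Suc i)) else fst (snd (xs!0)))"
    using wk_nth[OF wkx i] ne by (simp add: hd_conv_nth)
  show ?thesis
  proof (cases "Suc i < length xs")
    case True
    then have "(int i + 1) mod int (length xs) = int (Suc i)" by simp
    then show ?thesis using h True by (simp only: nat_int) simp
  next
    case False
    then have "int i + 1 = int (length xs)" using i by simp
    then show ?thesis using h False by simp
  qed
qed

lemma V_ext: "x \<in> V D p e e' \<Longrightarrow> x \<in> extensional D"
  unfolding V_def psi_def by auto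

lemma VE1:
  assumes cl: "closedw D p C" and p: "2 \<le> p" and mn: "real (wt D C) = real (length C) * Iv D p"
    and ds: "distinct (map (\<lambda>e. fst (snd e)) C)"
  shows "restrict (fst (hd C)) D \<in> V D p (snd (snd (hd C))) (fst (snd (hd C)))"
proof -
  define r where "r = length C"
  have ne: "C \<noteq> []" using cl unfolding closedw_def by simp
  then have r: "1 \<le> r" unfolding r_def by (cases C) auto
  have hd0: "hd C = C!0" using ne by (simp add: hd_conv_nth)
  have UE: "Ul D p C \<in> E D p r" using I1(1)[OF cl p] r_def by simp
  have mi: "minimal D p r (Ul D p C)" using UE I1(2)[OF cl p] mn r_def by (simp add: minimal_iff[OF p])
  have sp: "supp D p r (Ul D p C) k = fst (snd (C ! nat ((-k) mod int r)))" for k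
    using I1(3)[OF cl p] r_def by simp
  have irr: "irreducible_el D p r (Ul D p C)"
    unfolding irreducible_el_def inj_on_def
  proof (intro ballI impI)
    fix k1 k2 assume k1: "k1 \<in> {0..<int r}" and k2: "k2 \<in> {0..<int r}"
      and eq: "supp D p r (Ul D p C) k1 = supp D p r (Ul D p C) k2"
    have b1: "nat ((-k1) mod int r) < r" and b2: "nat ((-k2) mod int r) < r" using r by (simp_all add: nat_less_iff)
    have "map (\<lambda>e. fst (snd e)) C ! nat ((-k1) mod int r) = map (\<lambda>e. fst (snd e)) C ! nat ((-k2) mod int r)"
      using eq b1 b2 sp[of k1] sp[of k2] by (simp add: r_def)
    then have "nat ((-k1) mod int r) = nat ((-k2) mod int r)"
      using nth_eq_iff_index_eq[OF ds] b1 b2 r_def by simp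
    moreover have "0 \<le> (-k1) mod int r" "0 \<le> (-k2) mod int r" using r by simp_all
    ultimately have "(-k1) mod int r = (-k2) mod int r" by (metis nat_0_le)
    then have "(- (-k1)) mod int r = (- (-k2)) mod int r" by (rule mod_minus_cong)
    then show "k1 = k2" using k1 k2 by simp
  qed
  have MI: "(r, Ul D p C) \<in> MI D p" unfolding MI_def using r UE mi irr by simp
  have s1: "supp D p r (Ul D p C) (-1) = snd (snd (hd C))"
    unfolding sp hd0 using hi_nth[OF cl, of 0] ne r_def by simp
  have s0: "supp D p r (Ul D p C) 0 = fst (snd (hd C))" unfolding sp hd0 by simp
  have ps: "psi D p (Ul D p C) = restrict (fst (hd C)) D" by (rule I1(4)[OF cl p])
  show ?thesis unfolding V_def using MI s1 s0 ps by force
qed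

lemma VE2:
  assumes x: "x \<in> V D p e e'" and p: "2 \<le> p"
  shows "\<exists>C. closedw D p C \<and> real (wt D C) = real (length C) * Iv D p \<and> hd C = (x, e', e)"
proof -
  obtain r U where xU: "x = psi D p U" and MI: "(r, U) \<in> MI D p" and s1: "supp D p r U (-1) = e"
    and s0: "supp D p r U 0 = e'" using x unfolding V_def by blast
  have r: "1 \<le> r" and UE: "U \<in> E D p r" and mi: "minimal D p r U" using MI unfolding MI_def by auto
  obtain xs where cl: "closedw D p xs" and len: "length xs = r" and Ux: "Ul D p xs = U"
    and dg: "\<forall>i<r. fst (xs!i) = (\<lambda>d\<in>D. U d div p^i mod p)" using I2[OF UE r p] by blast
  have ne: "xs \<noteq> []" using len r by auto
  have wt: "real (wt D xs) = real (length xs) * Iv D p"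
    using mi I1(2)[OF cl p] Ux len by (simp add: minimal_iff[OF p])
  have sp: "supp D p r U k = fst (snd (xs ! nat ((-k) mod int r)))" for k
    using I1(3)[OF cl p] Ux len by simp
  have f: "fst (xs!0) = x" using dg r unfolding xU psi_def by simp
  have l: "fst (snd (xs!0)) = e'" using s0 sp[of 0] by simp
  have r0: "0 < r" using r by simp
  have h: "snd (snd (xs!0)) = e" using s1 sp[of "-1"] hi_nth[OF cl, of 0] ne len r0 by simp
  have "hd xs = (x, e', e)" using f l h ne by (simp add: hd_conv_nth prod_eq_iff)
  then show ?thesis using cl wt by blast
qed

lemma per_int:
  fixes \<phi> :: "int \<Rightarrow> 'b"
  assumes per: "\<forall>k. \<phi> (k + int m) = \<phi> k"
  shows "\<phi> (k + int m * q) = \<phi> k"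
proof -
  have nat_case: "\<phi> (k + int m * int n) = \<phi> k" for k n
  proof (induction n arbitrary: k)
    case 0 then show ?case by simp
  next
    case (Suc n)
    have "\<phi> (k + int m * int (Suc n)) = \<phi> ((k + int m * int n) + int m)" by (simp add: algebra_simps)
    also have "\<dots> = \<phi> (k + int m * int n)" using per by simp
    finally show ?case using Suc by simp
  qed
  show ?thesis
  proof (cases "q \<ge> 0")
    case True
    then show ?thesis using nat_case[of k "nat q"] by simp
  next
    case False
    have "\<phi> ((k + int m * q) + int m * int (nat (-q))) = \<phi> (k + int m * q)" by (rule nat_case)
    then show ?thesis using False by (simp add: algebra_simps)
  qed
qed

theorem proposition2p18:
  fixes D :: "(nat^'n) set" and p m :: nat and \<phi> :: "int \<Rightarrow> nat^'n"
  assumes "finite D"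
    and "\<forall>j. \<exists>d\<in>D. d $ j \<noteq> 0"
    and "prime p" and "m \<ge> 1"
    and "\<forall>k. \<phi> (k + int m) = \<phi> k"
    and "range \<phi> \<subseteq> Sigma_p D p"
  shows "(Mset D p m \<phi> = {} \<longleftrightarrow> (\<exists>i<m. V D p (\<phi> (- int i - 1)) (\<phi> (- int i)) = {}))
    \<and> ((\<forall>i<m. V D p (\<phi> (- int i - 1)) (\<phi> (- int i)) \<noteq> {}) \<longrightarrow>
        bij_betw (Bmap D p m) (Mset D p m \<phi>)
          (\<Pi>\<^sub>E i\<in>{..<m}. V D p (\<phi> (- int i - 1)) (\<phi> (- int i))))"
proof -
  have p: "2 \<le> p" using assms(3) by (simp add: prime_ge_2_nat)
  have m: "1 \<le> m" using assms(4) .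
  have per: "\<forall>k. \<phi> (k + int m) = \<phi> k" using assms(5) .
  define Vi where "Vi i = V D p (\<phi> (- int i - 1)) (\<phi> (- int i))" for i
  have pm: "p^m \<ge> 2"
  proof -
    have "p^1 \<le> p^m" using p m by (intro power_increasing) auto
    then show ?thesis using p by simp
  qed
  have fwd: "Bmap D p m U \<in> (\<Pi>\<^sub>E i\<in>{..<m}. Vi i)" if U: "U \<in> Mset D p m \<phi>" for U
  proof -
    have UE: "U \<in> E D p m" and mi: "minimal D p m U" and sU: "supp D p m U = \<phi>"
      using U unfolding Mset_def by auto
    obtain xs where cl: "closedw D p xs" and len: "length xs = m" and Ux: "Ul D p xs = U"
      and dg: "\<forall>i<m. fst (xs!i) = (\<lambda>d\<in>D. U d div p^i mod p)" using I2[OF UE m p] by blast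
    have wt: "real (wt D xs) = real (length xs) * Iv D p"
      using mi I1(2)[OF cl p] Ux len by (simp add: minimal_iff[OF p])
    have sp: "\<phi> k = fst (snd (xs ! nat ((-k) mod int m)))" for k
      using I1(3)[OF cl p] Ux len sU by auto
    show ?thesis
    proof (rule PiE_I)
      fix i assume i: "i \<in> {..<m}"
      then have im: "i < m" by simp
      have rot: "closedw D p (drop i xs @ take i xs) \<and> hd (drop i xs @ take i xs) = xs!i \<and>
        wt D (drop i xs @ take i xs) = wt D xs \<and> length (drop i xs @ take i xs) = length xs"
        using rotate_closed[OF cl, of i] im len by simp
      then obtain C where C: "closedw D p C" "real (wt D C) = real (length C) * Iv D p" "hd C = xs!i"
        "distinct (map (\<lambda>e. fst (snd e)) C)"
        using split_simple[of D p "drop i xs @ take i xs"] p wt by auto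
      have inV: "restrict (fst (xs!i)) D \<in> V D p (snd (snd (xs!i))) (fst (snd (xs!i)))"
        using VE1[OF C(1) p C(2) C(4)] C(3) by simp
      have lo: "fst (snd (xs!i)) = \<phi> (- int i)" using sp[of "- int i"] im by simp
      have hi: "snd (snd (xs!i)) = \<phi> (- int i - 1)"
        using sp[of "- int i - 1"] hi_nth[OF cl, of i] im len by (simp add: add.commute)
      have "Bmap D p m U i = fst (xs!i)" unfolding Bmap_def using im dg by simp
      also have "\<dots> = restrict (fst (xs!i)) D" using dg im by simp
      finally show "Bmap D p m U i \<in> Vi i" using inV lo hi unfolding Vi_def by simp
    next
      fix i assume "i \<notin> {..<m}"
      then show "Bmap D p m U i = undefined" unfolding Bmap_def by simp
    qed
  qed
  have bwd: "\<exists>U\<in>Mset D p m \<phi>. Bmap D p m U = v" if v: "v \<in> (\<Pi>\<^sub>E i\<in>{..<m}. Vi i)" for v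
  proof -
    have vi: "v i \<in> Vi i" if "i < m" for i using v that by auto
    define g where "g i = (v i, \<phi> (- int i), \<phi> (- int i - 1))" for i
    have Cex: "\<exists>C. closedw D p C \<and> real (wt D C) = real (length C) * Iv D p \<and> hd C = g i" if "i < m" for i
      using VE2[OF vi[OF that, unfolded Vi_def] p] unfolding g_def by simp
    have eok: "edgeok D p (g i)" if im: "i < m" for i
    proof -
      obtain C where C: "closedw D p C" "hd C = g i" using Cex[OF im] by blast
      then have "C \<noteq> []" and "wk D p (fst (snd (hd C))) C (fst (snd (hd C)))" unfolding closedw_def by auto
      then show ?thesis using C(2) by (cases C) auto
    qed
    have gpos: "0 < fst (snd (g i)) $ j" if im: "i < m" for i j
    proof -
      obtain C where C: "closedw D p C" "hd C = g i" using Cex[OF im] by blast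
      then have "C \<noteq> []" "\<forall>e\<in>set C. \<forall>j. 0 < fst (snd e) $ j" unfolding closedw_def by auto
      then show ?thesis using C(2) by (cases C) auto
    qed
    define xs where "xs = map g [0..<m]"
    have wkk: "k \<le> m \<longrightarrow> wk D p (\<phi> 0) (map g [0..<k]) (\<phi> (- int k))" for k
    proof (induction k)
      case 0 then show ?case by simp
    next
      case (Suc k)
      show ?case
      proof
        assume k: "Suc k \<le> m"
        have e0: "- int k - 1 = - int (Suc k)" by simp
        have e: "\<phi> (- int k - 1) = \<phi> (- int (Suc k))" using e0 by (rule arg_cong)
        have w1: "wk D p (\<phi> 0) (map g [0..<k]) (\<phi> (- int k))" using Suc k by simp
        have w2: "wk D p (\<phi> (- int k)) [g k] (\<phi> (- int (Suc k)))"
          using eok[of k] k e unfolding g_def by simp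
        have "map g [0..<Suc k] = map g [0..<k] @ [g k]" by simp
        then show "wk D p (\<phi> 0) (map g [0..<Suc k]) (\<phi> (- int (Suc k)))"
          using w1 w2 wk_append by metis
      qed
    qed
    have pm0: "\<phi> (- int m) = \<phi> 0" using per[rule_format, of "- int m"] by simp
    have len: "length xs = m" unfolding xs_def by simp
    have ne: "xs \<noteq> []" using m unfolding xs_def by simp
    have hdx: "fst (snd (hd xs)) = \<phi> 0" using m unfolding xs_def g_def by (simp add: hd_map)
    have cl: "closedw D p xs" unfolding closedw_def
      using ne hdx wkk[of m] pm0 gpos unfolding xs_def by auto
    have wt: "real (wt D xs) = real (length xs) * Iv D p"
      by (rule min_glue[OF cl p]) (use Cex len in \<open>simp add: xs_def\<close>)
    define U where "U = Ul D p xs"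
    have UE: "U \<in> E D p m" using I1(1)[OF cl p] len U_def by simp
    have mi: "minimal D p m U" using UE I1(2)[OF cl p] wt len U_def by (simp add: minimal_iff[OF p])
    have sp: "supp D p m U = \<phi>"
    proof
      fix k
      have "supp D p m U k = fst (snd (xs ! nat ((-k) mod int m)))" using I1(3)[OF cl p] len U_def by simp
      also have "\<dots> = \<phi> (- int (nat ((-k) mod int m)))"
      proof -
        have "nat ((-k) mod int m) < m" using m by (simp add: nat_less_iff)
        then show ?thesis unfolding xs_def g_def by simp
      qed
      also have "\<dots> = \<phi> (- ((-k) mod int m))" using m by simp
      also have "\<dots> = \<phi> (k + int m * ((-k) div int m))"
      proof -
        have "int m * ((-k) div int m) + (-k) mod int m = -k" by (metis div_mult_mod_eq mult.commute)
        then have "- ((-k) mod int m) = k + int m * ((-k) div int m)" by linarith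
        then show ?thesis by (rule arg_cong)
      qed
      also have "\<dots> = \<phi> k" by (rule per_int[OF per])
      finally show "supp D p m U k = \<phi> k" .
    qed
    have UM: "U \<in> Mset D p m \<phi>" unfolding Mset_def using UE mi sp by simp
    have "Bmap D p m U = v"
    proof
      fix i
      show "Bmap D p m U i = v i"
      proof (cases "i < m")
        case True
        have ext: "v i \<in> extensional D" using V_ext vi[OF True] unfolding Vi_def by blast
        have "Bmap D p m U i = (\<lambda>d\<in>D. fst (xs!i) d)"
          unfolding Bmap_def U_def using True I1(5)[OF cl p] len by (auto intro: restrict_ext)
        also have "\<dots> = v i" using True ext unfolding xs_def g_def by (simp add: extensional_restrict)
        finally show ?thesis .
      next
        case False
        then show ?thesis using v unfolding Bmap_def by (auto simp: PiE_def extensional_def)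
      qed
    qed
    then show ?thesis using UM by blast
  qed
  have inj: "inj_on (Bmap D p m) (Mset D p m \<phi>)"
  proof (rule inj_onI)
    fix U1 U2 assume U1: "U1 \<in> Mset D p m \<phi>" and U2: "U2 \<in> Mset D p m \<phi>"
      and eq: "Bmap D p m U1 = Bmap D p m U2"
    have P1: "U1 \<in> D \<rightarrow>\<^sub>E {0..p^m - 1}" and P2: "U2 \<in> D \<rightarrow>\<^sub>E {0..p^m - 1}"
      using U1 U2 unfolding Mset_def E_def by auto
    show "U1 = U2"
    proof
      fix d
      show "U1 d = U2 d"
      proof (cases "d \<in> D")
        case True
        have dig: "U1 d div p^i mod p = U2 d div p^i mod p" if "i < m" for i
          using fun_cong[OF fun_cong[OF eq, of i], of d] that True unfolding Bmap_def by simp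
        have "U1 d \<le> p^m - 1" "U2 d \<le> p^m - 1" using P1 P2 True by (auto simp: PiE_def Pi_def)
        then have l1: "U1 d < p^m" and l2: "U2 d < p^m" using pm by simp_all
        have "U1 d = (\<Sum>i<m. (U1 d div p^i mod p) * p^i)" using digit_expand[OF l1] p by simp
        also have "\<dots> = (\<Sum>i<m. (U2 d div p^i mod p) * p^i)" using dig by simp
        also have "\<dots> = U2 d" using digit_expand[OF l2] p by simp
        finally show ?thesis .
      next
        case False
        then show ?thesis using P1 P2 by (auto simp: PiE_def extensional_def)
      qed
    qed
  qed
  have img: "Bmap D p m ` Mset D p m \<phi> = (\<Pi>\<^sub>E i\<in>{..<m}. Vi i)"
    using fwd bwd by blast
  have part1: "Mset D p m \<phi> = {} \<longleftrightarrow> (\<exists>i<m. Vi i = {})"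
  proof
    assume "Mset D p m \<phi> = {}"
    then have "(\<Pi>\<^sub>E i\<in>{..<m}. Vi i) = {}" using img by simp
    then show "\<exists>i<m. Vi i = {}" by (auto simp: PiE_eq_empty_iff)
  next
    assume "\<exists>i<m. Vi i = {}"
    then have "(\<Pi>\<^sub>E i\<in>{..<m}. Vi i) = {}" by (auto simp: PiE_eq_empty_iff)
    then show "Mset D p m \<phi> = {}" using img by auto
  qed
  show ?thesis using part1 inj img unfolding Vi_def bij_betw_def by simp
qed

end
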